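(* Let $\Phi_1,\Phi_2$ be Young functions and $u:\mathbb{R}^n\to(0,\infty)$. Then the following statements are equivalent: (1) $\Phi_1 \prec \Phi_2$, i.e. there is a constant $C>0$ with $\Phi_1(t) \le \Phi_2(Ct)$ for all $t>0$; (2) $wL_{\Phi_2}^u(\mathbb{R}^n) \subseteq wL_{\Phi_1}^u(\mathbb{R}^n)$; (3) there is a constant $C>0$ such that $\|f\|_{wL_{\Phi_1}^u(\mathbb{R}^n)} \le C\|f\|_{wL_{\Phi_2}^u(\mathbb{R}^n)}$ for every $f\in wL_{\Phi_2}^u(\mathbb{R}^n)$.
   Context: A Young function is a function $\Phi:[0,\infty)\to[0,\infty)$ that is convex, left-continuous, satisfies $\lim_{t\to0}\Phi(t)=0=\Phi(0)$ and $\lim_{t\to\infty}\Phi(t)=\infty$. For a Young function $\Phi$ and a weight $u:\mathbb{R}^n\to(0,\infty)$, the weighted weak Orlicz space $wL_\Phi^u(\mathbb{R}^n)$ is the set of measurable $f:\mathbb{R}^n\to\mathbb{R}$ with $\|f\|_{wL_\Phi^u(\mathbb{R}^n)} := \inf\{ b>0 : \sup_{t>0} \Phi(t)\,|\{x\in\mathbb{R}^n : |u(x)f(x)|/b > t\}| \le 1\} < \infty$, where $|\cdot|$ is Lebesgue measure. *)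

theory Defs
  imports "HOL-Analysis.Analysis"
begin

text \<open>Young function, viewed on [0,infinity) (values on negative reals are irrelevant).\<close>
definition young_function :: "(real \<Rightarrow> real) \<Rightarrow> bool" where
  "young_function \<Phi> \<longleftrightarrow>
     (\<forall>t\<ge>0. 0 \<le> \<Phi> t) \<and>
     convex_on {0..} \<Phi> \<and>
     (\<forall>t>0. continuous (at_left t) \<Phi>) \<and>
     \<Phi> 0 = 0 \<and> (\<Phi> \<longlongrightarrow> 0) (at_right 0) \<and>
     filterlim \<Phi> at_top at_top"

text \<open>The weak Orlicz (quasi)norm, with value infinity when no admissible b exists.\<close>
definition wOrlicz_norm ::
  "(real \<Rightarrow> real) \<Rightarrow> ('a::euclidean_space \<Rightarrow> real) \<Rightarrow> ('a \<Rightarrow> real) \<Rightarrow> ennreal" where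
  "wOrlicz_norm \<Phi> u f = Inf {ennreal b | b. b > 0 \<and>
      (\<forall>t>0. ennreal (\<Phi> t) * emeasure lebesgue {x. \<bar>u x * f x\<bar> / b > t} \<le> 1)}"

definition wOrlicz_space ::
  "(real \<Rightarrow> real) \<Rightarrow> ('a::euclidean_space \<Rightarrow> real) \<Rightarrow> ('a \<Rightarrow> real) set" where
  "wOrlicz_space \<Phi> u = {f. f \<in> borel_measurable lebesgue \<and> wOrlicz_norm \<Phi> u f < \<infinity>}"

end

theory Submission
  imports Defs
begin

lemma young_mono:
  assumes "young_function \<Phi>" "0 \<le> x" "x \<le> y"
  shows "\<Phi> x \<le> \<Phi> y"
proof (cases "y = 0")
  case True thus ?thesis using assms by simp
next
  case False
  hence y: "y > 0" using assms by simp
  have cv: "convex_on {0..} \<Phi>" and z: "\<Phi> 0 = 0" and nn: "\<Phi> y \<ge> 0"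
    using assms y unfolding young_function_def by auto
  have "\<Phi> ((1 - x/y) *\<^sub>R 0 + (x/y) *\<^sub>R y) \<le> (1 - x/y) * \<Phi> 0 + (x/y) * \<Phi> y"
    by (rule convex_onD[OF cv]) (use assms y in auto)
  moreover have "(1 - x/y) *\<^sub>R 0 + (x/y) *\<^sub>R y = x" using y by simp
  moreover have "(x/y) * \<Phi> y \<le> \<Phi> y"
  proof -
    have "x/y \<le> 1" using assms y by simp
    thus ?thesis using nn assms y by (intro mult_left_le_one_le) auto
  qed
  ultimately show ?thesis using z by simp
qed

lemma young_scale:
  assumes "young_function \<Phi>" "0 \<le> l" "l \<le> 1" "0 \<le> s"
  shows "\<Phi> (l * s) \<le> l * \<Phi> s"
proof -
  have cv: "convex_on {0..} \<Phi>" and z: "\<Phi> 0 = 0"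
    using assms unfolding young_function_def by auto
  have "\<Phi> ((1 - l) *\<^sub>R 0 + l *\<^sub>R s) \<le> (1 - l) * \<Phi> 0 + l * \<Phi> s"
    by (rule convex_onD[OF cv]) (use assms in auto)
  thus ?thesis using z by simp
qed

lemma P1_P3:
  assumes C: "C > 0" "\<forall>t>0. \<Phi>1 t \<le> \<Phi>2 (C * t)"
  shows "wOrlicz_norm \<Phi>1 u f \<le> ennreal C * wOrlicz_norm \<Phi>2 u f"
proof -
  define S2 where "S2 = {ennreal b | b. b > 0 \<and>
      (\<forall>t>0. ennreal (\<Phi>2 t) * emeasure lebesgue {x. \<bar>u x * f x\<bar> / b > t} \<le> 1)}"
  have "wOrlicz_norm \<Phi>1 u f / ennreal C \<le> Inf S2"
  proof (rule Inf_greatest)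
    fix y assume "y \<in> S2"
    then obtain b where b: "y = ennreal b" "b > 0"
      "\<And>t. t > 0 \<Longrightarrow> ennreal (\<Phi>2 t) * emeasure lebesgue {x. \<bar>u x * f x\<bar> / b > t} \<le> 1"
      unfolding S2_def by blast
    have adm: "ennreal (\<Phi>1 t) * emeasure lebesgue {x. \<bar>u x * f x\<bar> / (C * b) > t} \<le> 1"
      if t: "t > 0" for t
    proof -
      have eq: "{x. \<bar>u x * f x\<bar> / (C * b) > t} = {x. \<bar>u x * f x\<bar> / b > C * t}"
        using C b(2) by (auto simp: field_simps)
      have "ennreal (\<Phi>1 t) \<le> ennreal (\<Phi>2 (C * t))"
        using C t by (intro ennreal_leI) auto
      hence "ennreal (\<Phi>1 t) * emeasure lebesgue {x. \<bar>u x * f x\<bar> / b > C * t}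
          \<le> ennreal (\<Phi>2 (C * t)) * emeasure lebesgue {x. \<bar>u x * f x\<bar> / b > C * t}"
        by (rule mult_right_mono) simp
      also have "\<dots> \<le> 1" using b(3)[of "C * t"] C t by simp
      finally show ?thesis using eq by simp
    qed
    have "wOrlicz_norm \<Phi>1 u f \<le> ennreal (C * b)"
      unfolding wOrlicz_norm_def
      by (rule Inf_lower) (use adm C b(2) in auto)
    also have "\<dots> = ennreal C * y" using b C by (simp add: ennreal_mult)
    finally show "wOrlicz_norm \<Phi>1 u f / ennreal C \<le> y"
      by (intro divide_le_posI_ennreal) (use C in auto)
  qed
  hence "ennreal C * (wOrlicz_norm \<Phi>1 u f / ennreal C) \<le> ennreal C * wOrlicz_norm \<Phi>2 u f"
    unfolding S2_def wOrlicz_norm_def by (rule mult_left_mono) simp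
  moreover have "ennreal C * (wOrlicz_norm \<Phi>1 u f / ennreal C) = wOrlicz_norm \<Phi>1 u f"
    using C mult_divide_eq_ennreal[of "ennreal C" "wOrlicz_norm \<Phi>1 u f"]
    by (simp add: ennreal_times_divide mult.commute)
  ultimately show ?thesis by simp
qed

lemma P2_P1:
  fixes \<Phi>1 \<Phi>2 :: "real \<Rightarrow> real" and u :: "'a::euclidean_space \<Rightarrow> real"
  assumes Y1: "young_function \<Phi>1" and Y2: "young_function \<Phi>2"
    and upos: "\<And>x. u x > 0"
    and umeas: "u \<in> borel_measurable lebesgue"
    and notP1: "\<not> (\<exists>C>0. \<forall>t>0. \<Phi>1 t \<le> \<Phi>2 (C * t))"
  shows "\<not> (wOrlicz_space \<Phi>2 u \<subseteq> wOrlicz_space \<Phi>1 u)"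
proof -
  have "\<forall>k::nat. \<exists>t>0. \<Phi>2 ((real k + 1) * 2 ^ (k + 2) * t) < \<Phi>1 t"
  proof
    fix k :: nat
    have "(real k + 1) * 2 ^ (k + 2) > (0::real)" by simp
    thus "\<exists>t>0. \<Phi>2 ((real k + 1) * 2 ^ (k + 2) * t) < \<Phi>1 t"
      using notP1 by (meson not_le)
  qed
  then obtain T where T: "\<And>k. T k > 0" "\<And>k. \<Phi>2 ((real k + 1) * 2 ^ (k + 2) * T k) < \<Phi>1 (T k)"
    by metis
  have nn1: "\<And>t. t \<ge> 0 \<Longrightarrow> \<Phi>1 t \<ge> 0" and nn2: "\<And>t. t \<ge> 0 \<Longrightarrow> \<Phi>2 t \<ge> 0"
    using Y1 Y2 unfolding young_function_def by auto
  have Tpos1: "\<Phi>1 (T k) > 0" for k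
    using T(2)[of k] nn2[of "(real k + 1) * 2 ^ (k + 2) * T k"] T(1)[of k] by simp
  define s where "s k = (real k + 1) * T k" for k
  define m where "m k = 2 / \<Phi>1 (T k)" for k
  define l where "l k = root DIM('a) (m k)" for k
  define c where "c k = (\<Sum>j<k. l j)" for k
  define E where "E k = box (c k *\<^sub>R (One::'a)) ((c k + l k) *\<^sub>R One)" for k
  define v where "v x = (\<Sum>k. s k * indicator (E k) x)" for x
  define f where "f x = v x / u x" for x
  have mpos: "m k > 0" for k using Tpos1[of k] by (simp add: m_def)
  have lpos: "l k > 0" for k using mpos[of k] by (simp add: l_def)
  have spos: "s k > 0" for k using T(1)[of k] by (simp add: s_def)
  have cmono: "c k + l k \<le> c j" if "k < j" for k j
  proof -
    have "c k + l k = (\<Sum>i<Suc k. l i)" by (simp add: c_def)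
    also have "\<dots> \<le> (\<Sum>i<j. l i)"
      by (rule sum_mono2) (use that lpos in \<open>auto intro: less_imp_le\<close>)
    finally show ?thesis by (simp add: c_def)
  qed
  obtain b0 :: 'a where b0: "b0 \<in> Basis" using nonempty_Basis by blast
  have disj: "x \<notin> E j" if "x \<in> E k" "k \<noteq> j" for x k j
  proof
    assume "x \<in> E j"
    hence j: "c j < x \<bullet> b0" "x \<bullet> b0 < c j + l j" using b0 by (auto simp: E_def mem_box)
    have k: "c k < x \<bullet> b0" "x \<bullet> b0 < c k + l k" using that b0 by (auto simp: E_def mem_box)
    show False
    proof (cases "k < j")
      case True thus False using cmono[OF True] j k by simp
    next
      case False hence "j < k" using that by simp
      thus False using cmono[of j k] j k by simp
    qed
  qed
  have vE: "v x = s k" if "x \<in> E k" for x k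
  proof -
    have "v x = (\<Sum>i\<in>{k}. s i * indicator (E i) x)"
      unfolding v_def by (rule suminf_finite) (use disj that in auto)
    thus ?thesis using that by simp
  qed
  have v0: "v x = 0" if "\<forall>k. x \<notin> E k" for x
    unfolding v_def using that by simp
  have vnn: "v x \<ge> 0" for x
  proof (cases "\<exists>k. x \<in> E k")
    case True then obtain k where "x \<in> E k" by blast
    thus ?thesis using vE spos[of k] by simp
  qed (use v0 in simp)
  have Esets: "E k \<in> sets lebesgue" for k by (simp add: E_def)
  have Emeas: "emeasure lebesgue (E k) = ennreal (m k)" for k
  proof -
    have "emeasure lebesgue (E k) = emeasure lborel (E k)"
      by (simp add: E_def emeasure_completion)
    also have "\<dots> = ennreal (\<Prod>b\<in>(Basis::'a set). l k)"
      unfolding E_def using lpos[of k]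
      by (subst emeasure_lborel_box) (auto simp: algebra_simps inner_diff_left)
    also have "(\<Prod>b\<in>(Basis::'a set). l k) = m k"
      using mpos[of k] by (simp add: l_def)
    finally show ?thesis .
  qed
  have vmeas: "v \<in> borel_measurable lebesgue"
    unfolding v_def
    by (intro borel_measurable_suminf borel_measurable_times borel_measurable_const
        borel_measurable_indicator Esets)
  have fmeas: "f \<in> borel_measurable lebesgue"
    unfolding f_def using vmeas umeas by measurable
  have uf: "\<bar>u x * f x\<bar> = v x" for x
    using upos[of x] vnn[of x] by (simp add: f_def)
  have key: "\<Phi>2 t * m k \<le> (1/2) ^ Suc k" if "0 < t" "t < s k" for t k
  proof -
    define C where "C = (real k + 1) * 2 ^ (k + 2)"
    have Cpos: "C > 0" by (simp add: C_def)
    have "\<Phi>2 t \<le> \<Phi>2 (s k)" using that by (intro young_mono[OF Y2]) auto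
    also have "s k = (1 / 2 ^ (k+2)) * (C * T k)" by (simp add: s_def C_def)
    also have "\<Phi>2 \<dots> \<le> (1 / 2 ^ (k+2)) * \<Phi>2 (C * T k)"
    proof (rule young_scale[OF Y2])
      have "(1::real) \<le> 2 ^ (k+2)" by (rule one_le_power) simp
      thus "1 / 2 ^ (k+2) \<le> (1::real)" by simp
    qed (use T(1)[of k] Cpos in auto)
    also have "\<dots> \<le> (1 / 2 ^ (k+2)) * \<Phi>1 (T k)"
      using T(2)[of k] by (intro mult_left_mono) (auto simp: C_def)
    finally have "\<Phi>2 t * m k \<le> (1 / 2 ^ (k+2)) * \<Phi>1 (T k) * m k"
      using mpos[of k] by (intro mult_right_mono) auto
    also have "\<dots> = (1/2) ^ Suc k"
      using Tpos1[of k] by (simp add: m_def field_simps power_add power_one_over)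
    finally show ?thesis .
  qed
  have adm2: "ennreal (\<Phi>2 t) * emeasure lebesgue {x. \<bar>u x * f x\<bar> / 1 > t} \<le> 1"
    if t: "t > 0" for t
  proof -
    define A where "A k = (if t < s k then E k else {})" for k
    have Asets: "range A \<subseteq> sets lebesgue" using Esets by (auto simp: A_def)
    have sub: "{x. \<bar>u x * f x\<bar> / 1 > t} \<subseteq> \<Union>(range A)"
    proof
      fix x assume "x \<in> {x. \<bar>u x * f x\<bar> / 1 > t}"
      hence vx: "t < v x" using uf by simp
      then obtain k where k: "x \<in> E k" using v0 t by force
      thus "x \<in> \<Union>(range A)" using vE[OF k] vx by (auto simp: A_def)
    qed
    have "emeasure lebesgue {x. \<bar>u x * f x\<bar> / 1 > t} \<le> emeasure lebesgue (\<Union>(range A))"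
      by (rule emeasure_mono[OF sub]) (use Asets in auto)
    also have "\<dots> \<le> (\<Sum>k. emeasure lebesgue (A k))"
      by (rule emeasure_subadditive_countably[OF Asets])
    finally have "ennreal (\<Phi>2 t) * emeasure lebesgue {x. \<bar>u x * f x\<bar> / 1 > t}
        \<le> ennreal (\<Phi>2 t) * (\<Sum>k. emeasure lebesgue (A k))"
      by (rule mult_left_mono) simp
    also have "\<dots> = (\<Sum>k. ennreal (\<Phi>2 t) * emeasure lebesgue (A k))"
      by (simp add: ennreal_suminf_cmult)
    also have "\<dots> \<le> (\<Sum>k. ennreal ((1/2) ^ Suc k))"
    proof (rule suminf_le)
      fix k
      show "ennreal (\<Phi>2 t) * emeasure lebesgue (A k) \<le> ennreal ((1/2) ^ Suc k)"
      proof (cases "t < s k")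
        case True
        hence "ennreal (\<Phi>2 t) * emeasure lebesgue (A k) = ennreal (\<Phi>2 t * m k)"
          using Emeas[of k] nn2[of t] t mpos[of k] by (simp add: A_def ennreal_mult)
        also have "\<dots> \<le> ennreal ((1/2) ^ Suc k)"
          by (rule ennreal_leI) (rule key[OF t True])
        finally show ?thesis .
      qed (simp add: A_def)
    qed auto
    also have "\<dots> = ennreal 1"
      by (rule suminf_ennreal_eq) (use power_half_series in auto)
    finally show ?thesis by simp
  qed
  have f2: "f \<in> wOrlicz_space \<Phi>2 u"
  proof -
    have "wOrlicz_norm \<Phi>2 u f \<le> ennreal 1"
      unfolding wOrlicz_norm_def by (rule Inf_lower) (use adm2 in auto)
    thus ?thesis using fmeas by (auto simp: wOrlicz_space_def le_less_trans)
  qed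
  have f1: "f \<notin> wOrlicz_space \<Phi>1 u"
  proof -
    have empty: "{ennreal b | b. b > 0 \<and>
      (\<forall>t>0. ennreal (\<Phi>1 t) * emeasure lebesgue {x. \<bar>u x * f x\<bar> / b > t} \<le> 1)} = {}"
    proof (rule ccontr)
      assume "\<not> ?thesis"
      then obtain b where b: "b > 0"
        "\<And>t. t > 0 \<Longrightarrow> ennreal (\<Phi>1 t) * emeasure lebesgue {x. \<bar>u x * f x\<bar> / b > t} \<le> 1"
        by blast
      obtain k :: nat where k: "b < real k" using reals_Archimedean2 by blast
      have sub: "E k \<subseteq> {x. \<bar>u x * f x\<bar> / b > T k}"
      proof
        fix x assume x: "x \<in> E k"
        have "b * T k < (real k + 1) * T k"
          using k T(1)[of k] by (intro mult_strict_right_mono) auto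
        thus "x \<in> {x. \<bar>u x * f x\<bar> / b > T k}"
          using vE[OF x] uf[of x] b(1) by (simp add: s_def field_simps)
      qed
      have meas: "{x. \<bar>u x * f x\<bar> / b > T k} \<in> sets lebesgue"
      proof -
        have "(\<lambda>x. \<bar>u x * f x\<bar> / b) \<in> borel_measurable lebesgue"
          using fmeas umeas by measurable
        from lebesgue_measurable_vimage_borel[OF this, of "{T k<..}"]
        show ?thesis by simp
      qed
      have "ennreal 2 = ennreal (\<Phi>1 (T k)) * ennreal (m k)"
        using Tpos1[of k] by (simp add: m_def flip: ennreal_mult)
      also have "\<dots> \<le> ennreal (\<Phi>1 (T k)) * emeasure lebesgue {x. \<bar>u x * f x\<bar> / b > T k}"
        unfolding Emeas[symmetric] by (intro mult_left_mono emeasure_mono[OF sub meas]) simp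
      also have "\<dots> \<le> 1" by (rule b(2)[OF T(1)])
      finally show False by simp
    qed
    have "wOrlicz_norm \<Phi>1 u f = top"
      unfolding wOrlicz_norm_def using empty by (metis Inf_empty)
    thus ?thesis by (simp add: wOrlicz_space_def)
  qed
  show ?thesis using f1 f2 by blast
qed

theorem theorem2p3:
  fixes \<Phi>1 \<Phi>2 :: "real \<Rightarrow> real" and u :: "'a::euclidean_space \<Rightarrow> real"
  assumes "young_function \<Phi>1" and "young_function \<Phi>2"
    and "\<And>x. u x > 0"
    and "u \<in> borel_measurable lebesgue"
  shows "((\<exists>C>0. \<forall>t>0. \<Phi>1 t \<le> \<Phi>2 (C * t))
            \<longleftrightarrow> wOrlicz_space \<Phi>2 u \<subseteq> wOrlicz_space \<Phi>1 u)
       \<and> (wOrlicz_space \<Phi>2 u \<subseteq> wOrlicz_space \<Phi>1 u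
            \<longleftrightarrow> (\<exists>C>0. \<forall>f\<in>wOrlicz_space \<Phi>2 u.
                   wOrlicz_norm \<Phi>1 u f \<le> ennreal C * wOrlicz_norm \<Phi>2 u f))"
proof -
  let ?P1 = "\<exists>C>0. \<forall>t>0. \<Phi>1 t \<le> \<Phi>2 (C * t)"
  let ?P2 = "wOrlicz_space \<Phi>2 u \<subseteq> wOrlicz_space \<Phi>1 u"
  let ?P3 = "\<exists>C>0. \<forall>f\<in>wOrlicz_space \<Phi>2 u.
                   wOrlicz_norm \<Phi>1 u f \<le> ennreal C * wOrlicz_norm \<Phi>2 u f"
  have 13: "?P1 \<Longrightarrow> ?P3" using P1_P3 by blast
  have 32: "?P2" if p3: "?P3"
  proof
    fix f assume f: "f \<in> wOrlicz_space \<Phi>2 u"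
    obtain C where C: "C > 0" "wOrlicz_norm \<Phi>1 u f \<le> ennreal C * wOrlicz_norm \<Phi>2 u f"
      using p3 f by blast
    have "ennreal C * wOrlicz_norm \<Phi>2 u f < top"
      using f by (simp add: wOrlicz_space_def ennreal_mult_less_top)
    thus "f \<in> wOrlicz_space \<Phi>1 u"
      using C f by (auto simp: wOrlicz_space_def)
  qed
  have 21: "?P2 \<Longrightarrow> ?P1" using P2_P1[OF assms] by blast
  show ?thesis using 13 32 21 by blast
qed

end
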